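(* For every odd prime $p$, $$\sum_{k=0}^{p-1} (k+1)_{\frac{p-1}{2}}^2 \equiv -1 \pmod{p}.$$
   Context: $(a)_n = a(a+1)\cdots(a+n-1)$ denotes the rising factorial, with $(a)_0 = 1$. *)

theory Defs
  imports Complex_Main "HOL-Number_Theory.Cong"
begin

end

theory Submission imports Defs "HOL-Number_Theory.Number_Theory" begin
lemma wil: fixes p :: nat assumes "prime p"
  shows "m \<le> p - 1 \<Longrightarrow> [fact m * fact (p-1-m) = ((-1::int)^(m+1))] (mod int p)"
proof (induction m)
  case 0
  then show ?case using wilson_theorem[OF assms] by simp
next
  case (Suc m)
  have p1: "p - 1 - m = Suc (p - 1 - Suc m)" using Suc.prems by simp
  have e: "(fact m * fact (p-1-m) :: int) = fact m * int (p-1-m) * fact (p-1-Suc m)"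
    by (subst p1, simp only: fact_Suc) (use Suc.prems in simp)
  have c: "[int (p-1-m) = - int (Suc m)] (mod int p)"
  proof -
    have "int (p-1-m) = - int (Suc m) + int p" using Suc.prems prime_gt_0_nat[OF assms] by simp
    thus ?thesis by (simp add: cong_def)
  qed
  have "[fact m * int (p-1-m) * fact (p-1-Suc m) = fact m * (- int (Suc m)) * fact (p-1-Suc m)] (mod int p)"
    by (intro cong_mult cong_refl c)
  then have "[(fact m * fact (p-1-m) :: int) = - (fact (Suc m) * fact (p-1-Suc m))] (mod int p)"
    using e by (simp add: algebra_simps)
  then have "[- (fact (Suc m) * fact (p-1-Suc m)) = ((-1::int)^(m+1))] (mod int p)"
    using Suc by (meson cong_sym cong_trans Suc_leD)
  then have "[- (- (fact (Suc m) * fact (p-1-Suc m))) = - ((-1::int)^(m+1))] (mod int p)"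
    using cong_minus_minus_iff by blast
  then show ?case by simp
qed

lemma pfact: "pochhammer (int k + 1) n * fact k = (fact (k+n) :: int)"
proof (induction n)
  case 0 then show ?case by simp
next
  case (Suc n)
  have "pochhammer (int k + 1) (Suc n) * fact k = (pochhammer (int k + 1) n * fact k) * (int k + 1 + int n)"
    by (simp add: pochhammer_Suc algebra_simps)
  also have "\<dots> = fact (k + Suc n)" using Suc by (simp add: algebra_simps)
  finally show ?case .
qed

lemma pzero: fixes p :: nat assumes "n < k" "k \<le> p - 1" "p - 1 < k + n" "p > 0"
  shows "[pochhammer (int k + 1) n = 0] (mod int p)"
proof -
  have "int p dvd (\<Prod>i\<in>{0..<n}. int k + 1 + of_nat i)"
  proof (rule dvd_trans)
    show "int p dvd int k + 1 + of_nat (p - 1 - k)" using assms by simp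
    show "int k + 1 + of_nat (p - 1 - k) dvd (\<Prod>i\<in>{0..<n}. int k + 1 + of_nat i)"
      by (rule dvd_prodI) (use assms in auto)
  qed
  thus ?thesis by (simp add: pochhammer_prod cong_0_iff)
qed

theorem lemma2p9:
  fixes p :: nat
  assumes "prime p" and "odd p"
  shows "[(\<Sum>k=0..p-1. (pochhammer (int k + 1) ((p - 1) div 2))^2) = -1] (mod int p)"
proof -
  define n where "n = (p - 1) div 2"
  have p2: "p = 2*n + 1" using assms(2) unfolding n_def by presburger
  have pp: "p > 0" using p2 by simp
  define t :: int where "t = (-1)^(n+1)"
  have tt: "t * t = 1" unfolding t_def by (simp flip: power_add power_mult_distrib)
  have nf: "[fact n * fact n = t] (mod int p)"
    using wil[OF assms(1), of n] p2 unfolding t_def by simp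
  have key: "[(pochhammer (int k + 1) n)^2 = t * (int (n choose k))^2] (mod int p)" if k: "k \<le> n" for k
  proof -
    define f where "f = pochhammer (int k + 1) n"
    define X :: int where "X = fact k * fact (n - k)"
    define s :: int where "s = (-1)^(k+n+1)"
    have "f * X = fact (k+n) * fact (p - 1 - (k+n))"
      unfolding f_def X_def using pfact[of k n] p2 k
      by (simp add: algebra_simps)
    then have fX: "[f * X = s] (mod int p)" using wil[OF assms(1), of "k+n"] p2 k unfolding s_def by simp
    have CX: "int (n choose k) * X = fact n"
    proof -
      have "fact k * fact (n - k) * (n choose k) = (fact n :: nat)" using binomial_fact_lemma[OF k] .
      then have "int (fact k * fact (n - k) * (n choose k)) = int (fact n)" by simp
      thus ?thesis unfolding X_def by (simp add: of_nat_fact algebra_simps)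
    qed
    have eq: "f * fact n = int (n choose k) * (f * X)" by (simp flip: CX add: algebra_simps)
    have "[f * fact n = int (n choose k) * s] (mod int p)"
      unfolding eq using fX by (rule cong_scalar_left)
    then have "[(f * fact n)^2 = (int (n choose k) * s)^2] (mod int p)" by (rule cong_pow)
    then have a: "[f^2 * (fact n * fact n) = (int (n choose k))^2] (mod int p)"
      by (simp add: power2_eq_square algebra_simps s_def flip: power_add power_mult_distrib)
    have "[f^2 * (fact n * fact n) = f^2 * t] (mod int p)" using nf by (simp add: cong_scalar_left)
    then have "[f^2 * t = (int (n choose k))^2] (mod int p)" using a by (meson cong_sym cong_trans)
    then have "[f^2 * t * t = t * (int (n choose k))^2] (mod int p)"
      by (metis cong_scalar_right mult.commute)
    then show ?thesis using tt unfolding f_def by (simp add: mult.assoc)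
  qed
  have split: "{0..p-1} = {0..n} \<union> {n+1..p-1}" using p2 by auto
  have S: "(\<Sum>k=0..p-1. (pochhammer (int k + 1) n)^2) =
     (\<Sum>k=0..n. (pochhammer (int k + 1) n)^2) + (\<Sum>k=n+1..p-1. (pochhammer (int k + 1) n)^2)"
    unfolding split by (rule sum.union_disjoint) auto
  have Z: "[(\<Sum>k=n+1..p-1. (pochhammer (int k + 1) n)^2) = (\<Sum>k=n+1..p-1. 0)] (mod int p)"
  proof (rule cong_sum)
    fix k assume "k \<in> {n+1..p-1}"
    then have "[pochhammer (int k + 1) n = 0] (mod int p)" using pzero[of n k p] p2 by simp
    then have "[(pochhammer (int k + 1) n)^2 = 0^2] (mod int p)" by (rule cong_pow)
    thus "[(pochhammer (int k + 1) n)^2 = 0] (mod int p)" by simp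
  qed
  have A: "[(\<Sum>k=0..n. (pochhammer (int k + 1) n)^2) = (\<Sum>k=0..n. t * (int (n choose k))^2)] (mod int p)"
    by (rule cong_sum) (use key in auto)
  have V: "(\<Sum>k=0..n. t * (int (n choose k))^2) = t * int ((2*n) choose n)"
  proof -
    have "(\<Sum>k=0..n. (int (n choose k))^2) = int (\<Sum>k\<le>n. (n choose k)^2)"
      by (simp add: atLeast0AtMost)
    also have "\<dots> = int ((2*n) choose n)" by (simp add: choose_square_sum)
    finally show ?thesis by (metis sum_distrib_left)
  qed
  have B: "[int ((2*n) choose n) * (fact n * fact n) = -1] (mod int p)"
  proof -
    have nat: "((2*n) choose n) * fact n * fact n = (fact (2*n) :: nat)"
      using binomial_fact_lemma[of n "2*n"] by (simp add: mult_2 algebra_simps)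
    have "int (((2*n) choose n) * fact n * fact n) = int (fact (2*n))" using nat by simp
    hence "int ((2*n) choose n) * (fact n * fact n) = fact (2*n)"
      by (simp only: of_nat_mult of_nat_fact mult.assoc)
    moreover have "p - 1 = 2*n" using p2 by simp
    ultimately show ?thesis using wilson_theorem[OF assms(1)] by simp
  qed
  have "[int ((2*n) choose n) * (fact n * fact n) = int ((2*n) choose n) * t] (mod int p)"
    using nf by (rule cong_scalar_left)
  from cong_trans[OF cong_sym[OF this] B]
  have C: "[t * int ((2*n) choose n) = -1] (mod int p)" by (simp add: mult.commute)
  have "[(\<Sum>k=0..p-1. (pochhammer (int k + 1) n)^2) = t * int ((2*n) choose n) + 0] (mod int p)"
    unfolding S using cong_add[OF A Z] V by simp
  from cong_trans[OF this] C
  have "[(\<Sum>k=0..p-1. (pochhammer (int k + 1) n)^2) = -1] (mod int p)" by simp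
  thus ?thesis unfolding n_def .
qed
end
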